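(* Consider (CVOP) and its associated convex projection (Pv) with feasible set $S_a$ and $Y_a=\operatorname{proj}_y[S_a]$. (1) If $\bar S\subseteq S_a$ is a solution of (Pv), then $\bar X:=\operatorname{proj}_x[\bar S]$ is an infimizer of (CVOP). (2) If (Pv) is self-bounded, then (CVOP) is self-bounded. If, additionally, $(\operatorname{cl}Y_a)_\infty=\operatorname{cl}C$, then (CVOP) is bounded. (3) Let (Pv) be self-bounded and let $\bar S\subseteq S_a$ be a finite $\epsilon$-solution of (Pv). Then $\bar X:=\operatorname{proj}_x[\bar S]$ is a finite $\tilde\epsilon$-infimizer of (CVOP) for every $\tilde\epsilon>\epsilon/\delta_c$, where $\delta_c:=\sup\{\delta>0: c+B_\delta\subseteq C\}$.
   Context: (CVOP): $\min\Gamma(x)$ w.r.t. $\le_C$ s.t. $x\in\mathcal{X}$, with $C\subseteq\mathbb{R}^m$ a non-trivial pointed solid convex cone, $\mathcal{X}\subseteq\mathbb{R}^n$ convex, $\Gamma$ $C$-convex; upper image $\mathcal{G}=\operatorname{cl}(\Gamma[\mathcal{X}]+C)$. $S_a=\{(x,y):x\in\mathcal{X},y\in\Gamma(x)+C\}$, $\operatorname{proj}_x(x,y)=x$, $\operatorname{proj}_y(x,y)=y$. Recession cone $A_\infty=\{y:x+\lambda y\in A\ \forall x\in A,\lambda\ge0\}$. Fix a $p$-norm with closed balls $B_\epsilon$, a direction $c\in\operatorname{int}C$ with $\|c\|=1$ and $\epsilon>0$. (CVOP) is bounded if $\mathcal{G}\subseteq\{q\}+C$ for some $q$; self-bounded if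 $\mathcal{G}\ne\mathbb{R}^m$ and $\mathcal{G}\subseteq\{q\}+\mathcal{G}_\infty$ for some $q$. $\bar X\subseteq\mathcal{X}$ is an infimizer if $\mathcal{G}=\operatorname{cl}\operatorname{conv}(\Gamma[\bar X]+C)$. A nonempty finite $\bar X$ is a finite $\epsilon$-infimizer if $\mathcal{G}\subseteq\operatorname{conv}\Gamma[\bar X]+C-\epsilon\{c\}$ (bounded case), resp. $\mathcal{G}\subseteq\operatorname{conv}\Gamma[\bar X]+\mathcal{G}_\infty-\epsilon\{c\}$ (self-bounded case). For (Pv): $\bar S\subseteq S_a$ is a solution if $Y_a\subseteq\operatorname{cl}\operatorname{conv}\operatorname{proj}_y[\bar S]$; (Pv) is self-bounded if $Y_a\ne\mathbb{R}^m$ and $Y_a\subseteq\operatorname{conv}\{y^{(1)},\dots,y^{(k)}\}+(\operatorname{cl}Y_a)_\infty$ for finitely many points; a nonempty finite $\bar S\subseteq S_a$ is a finite $\epsilon$-solution of self-bounded (Pv) if $Y_a\subseteq\operatorname{conv}\operatorname{proj}_y[\bar S]+(\operatorname{cl}Y_a)_\infty+B_\epsilon$. *)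

theory Defs
  imports "HOL-Analysis.Analysis" "HOL-Library.Extended_Real"
begin

definition msum :: "'a::plus set \<Rightarrow> 'a set \<Rightarrow> 'a set" where
  "msum A B = {a + b | a b. a \<in> A \<and> b \<in> B}"

definition rec_cone :: "'a::real_vector set \<Rightarrow> 'a set" where
  "rec_cone A = {y. \<forall>x\<in>A. \<forall>l::real. l \<ge> 0 \<longrightarrow> x + l *\<^sub>R y \<in> A}"

definition pnorm :: "ereal \<Rightarrow> real^'m \<Rightarrow> real" where
  "pnorm p y = (if p = \<infinity> then Max (range (\<lambda>i. \<bar>y $ i\<bar>))
                else (\<Sum>i\<in>UNIV. \<bar>y $ i\<bar> powr real_of_ereal p) powr (1 / real_of_ereal p))"

definition pball :: "ereal \<Rightarrow> real \<Rightarrow> (real^'m) set" where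
  "pball p e = {y. pnorm p y \<le> e}"

definition pointed :: "'a::real_vector set \<Rightarrow> bool" where
  "pointed C \<longleftrightarrow> C \<inter> uminus ` C \<subseteq> {0}"

definition C_convex :: "('b::real_vector) set \<Rightarrow> 'a::real_vector set \<Rightarrow> ('a \<Rightarrow> 'b) \<Rightarrow> bool" where
  "C_convex C X \<Gamma> \<longleftrightarrow> (\<forall>x\<in>X. \<forall>x'\<in>X. \<forall>t::real. 0 \<le> t \<and> t \<le> 1 \<longrightarrow>
      t *\<^sub>R \<Gamma> x + (1 - t) *\<^sub>R \<Gamma> x' - \<Gamma> (t *\<^sub>R x + (1 - t) *\<^sub>R x') \<in> C)"

definition Sa :: "'b::real_vector set \<Rightarrow> 'a set \<Rightarrow> ('a \<Rightarrow> 'b) \<Rightarrow> ('a \<times> 'b) set" where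
  "Sa C X \<Gamma> = {(x, y). x \<in> X \<and> y \<in> msum {\<Gamma> x} C}"

definition Ya :: "'b::real_vector set \<Rightarrow> 'a set \<Rightarrow> ('a \<Rightarrow> 'b) \<Rightarrow> 'b set" where
  "Ya C X \<Gamma> = snd ` Sa C X \<Gamma>"

definition upper_image :: "'b::real_normed_vector set \<Rightarrow> 'a set \<Rightarrow> ('a \<Rightarrow> 'b) \<Rightarrow> 'b set" where
  "upper_image C X \<Gamma> = closure (msum (\<Gamma> ` X) C)"

definition cvop_bounded :: "'b::real_normed_vector set \<Rightarrow> 'a set \<Rightarrow> ('a \<Rightarrow> 'b) \<Rightarrow> bool" where
  "cvop_bounded C X \<Gamma> \<longleftrightarrow> (\<exists>q. upper_image C X \<Gamma> \<subseteq> msum {q} C)"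

definition cvop_self_bounded :: "'b::real_normed_vector set \<Rightarrow> 'a set \<Rightarrow> ('a \<Rightarrow> 'b) \<Rightarrow> bool" where
  "cvop_self_bounded C X \<Gamma> \<longleftrightarrow> upper_image C X \<Gamma> \<noteq> UNIV \<and>
     (\<exists>q. upper_image C X \<Gamma> \<subseteq> msum {q} (rec_cone (upper_image C X \<Gamma>)))"

definition infimizer :: "'b::real_normed_vector set \<Rightarrow> 'a set \<Rightarrow> ('a \<Rightarrow> 'b) \<Rightarrow> 'a set \<Rightarrow> bool" where
  "infimizer C X \<Gamma> Xb \<longleftrightarrow> Xb \<subseteq> X \<and>
     upper_image C X \<Gamma> = closure (convex hull (msum (\<Gamma> ` Xb) C))"

text \<open>Finite eps-infimizer in the self-bounded case.\<close>
definition fin_eps_infimizer_sb ::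
  "'b::real_normed_vector set \<Rightarrow> 'a set \<Rightarrow> ('a \<Rightarrow> 'b) \<Rightarrow> 'b \<Rightarrow> real \<Rightarrow> 'a set \<Rightarrow> bool" where
  "fin_eps_infimizer_sb C X \<Gamma> c e Xb \<longleftrightarrow> Xb \<subseteq> X \<and> finite Xb \<and> Xb \<noteq> {} \<and>
     upper_image C X \<Gamma> \<subseteq>
       msum (msum (convex hull (\<Gamma> ` Xb)) (rec_cone (upper_image C X \<Gamma>))) {- (e *\<^sub>R c)}"

definition pv_solution :: "'b::real_normed_vector set \<Rightarrow> 'a set \<Rightarrow> ('a \<Rightarrow> 'b) \<Rightarrow> ('a \<times> 'b) set \<Rightarrow> bool" where
  "pv_solution C X \<Gamma> Sb \<longleftrightarrow> Sb \<subseteq> Sa C X \<Gamma> \<and>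
     Ya C X \<Gamma> \<subseteq> closure (convex hull (snd ` Sb))"

definition pv_self_bounded :: "'b::real_normed_vector set \<Rightarrow> 'a set \<Rightarrow> ('a \<Rightarrow> 'b) \<Rightarrow> bool" where
  "pv_self_bounded C X \<Gamma> \<longleftrightarrow> Ya C X \<Gamma> \<noteq> UNIV \<and>
     (\<exists>P. finite P \<and> P \<noteq> {} \<and>
        Ya C X \<Gamma> \<subseteq> msum (convex hull P) (rec_cone (closure (Ya C X \<Gamma>))))"

definition pv_fin_eps_solution ::
  "ereal \<Rightarrow> (real^'m) set \<Rightarrow> 'a set \<Rightarrow> ('a \<Rightarrow> real^'m) \<Rightarrow> real \<Rightarrow> ('a \<times> (real^'m)) set \<Rightarrow> bool" where
  "pv_fin_eps_solution p C X \<Gamma> e Sb \<longleftrightarrow> Sb \<noteq> {} \<and> finite Sb \<and> Sb \<subseteq> Sa C X \<Gamma> \<and>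
     Ya C X \<Gamma> \<subseteq> msum (msum (convex hull (snd ` Sb)) (rec_cone (closure (Ya C X \<Gamma>)))) (pball p e)"

definition delta_c :: "ereal \<Rightarrow> (real^'m) set \<Rightarrow> real^'m \<Rightarrow> real" where
  "delta_c p C c = Sup {d. d > 0 \<and> msum {c} (pball p d) \<subseteq> C}"

end

theory Submission
  imports Defs
begin


lemma msum_iff: "z \<in> msum A B \<longleftrightarrow> (\<exists>a\<in>A. \<exists>b\<in>B. z = a + b)"
  by (auto simp: msum_def)

lemma msum_UN: "msum A B = (\<Union>x\<in>A. \<Union>y\<in>B. {x + y})"
  by (auto simp: msum_def)

lemma closed_msum:
  fixes K R :: "'a::real_normed_vector set"
  shows "compact K \<Longrightarrow> closed R \<Longrightarrow> closed (msum K R)"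
  unfolding msum_UN by (rule compact_closed_sums)

lemma convex_msum: "convex A \<Longrightarrow> convex B \<Longrightarrow> convex (msum A B)"
  unfolding msum_UN by (rule convex_sums)

lemma msum_single:
  fixes A :: "'a::ab_semigroup_add set"
  shows "msum A {v} = (+) v ` A"
proof -
  have e: "(\<lambda>x. x + v) = (+) v" by (rule ext) (simp add: add.commute)
  have "msum A {v} = (\<lambda>x. x + v) ` A" unfolding msum_def by auto
  then show ?thesis unfolding e .
qed

lemma closed_msum_single:
  fixes A :: "'a::real_normed_vector set"
  shows "closed A \<Longrightarrow> closed (msum A {v})"
  unfolding msum_single by (rule closed_translation)

lemma Ya_eq: "Ya C X \<Gamma> = msum (\<Gamma> ` X) C"
  by (force simp: Ya_def Sa_def msum_def image_iff)

lemma cone_add: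
  assumes "convex C" "cone C" "x \<in> C" "y \<in> C" shows "x + y \<in> C"
proof -
  have "(1/2) *\<^sub>R x + (1/2) *\<^sub>R y \<in> C" using assms convexD[of C x y "1/2" "1/2"] by auto
  then have "2 *\<^sub>R ((1/2) *\<^sub>R x + (1/2) *\<^sub>R y) \<in> C" using assms(2) by (simp add: cone_def)
  then show ?thesis by (simp add: scaleR_add_right)
qed

lemma rec_cone_add:
  assumes "convex A" "u \<in> rec_cone A" "v \<in> rec_cone A" shows "u + v \<in> rec_cone A"
  using assms(2,3) unfolding rec_cone_def
  by (simp add: scaleR_add_right add.assoc[symmetric])

lemma rec_cone_closed:
  fixes A :: "'a::real_normed_vector set"
  assumes "closed A" shows "closed (rec_cone A)"
proof -
  have "rec_cone A = (\<Inter>x\<in>A. \<Inter>l\<in>{l::real. l \<ge> 0}. {y. x + l *\<^sub>R y \<in> A})"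
    by (auto simp: rec_cone_def)
  moreover have "closed {y. x + l *\<^sub>R y \<in> A}" for x l
  proof -
    have "closed ((\<lambda>y. x + l *\<^sub>R y) -` A)"
      by (rule continuous_closed_vimage[OF assms]) (auto intro!: continuous_intros)
    then show ?thesis by (simp add: vimage_def)
  qed
  ultimately show ?thesis by (simp add: closed_INT)
qed

lemma pnorm_scale:
  assumes p: "1 \<le> p" and a: "a > 0"
  shows "pnorm p (a *\<^sub>R y) = a * pnorm p y"
proof (cases "p = \<infinity>")
  case True
  have m: "mono (\<lambda>t::real. a * t)" using a by (auto intro: monoI)
  have "range (\<lambda>i. \<bar>(a *\<^sub>R y) $ i\<bar>) = (\<lambda>t. a * t) ` range (\<lambda>i. \<bar>y $ i\<bar>)"
    using a by (auto simp: abs_mult image_image)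
  then show ?thesis using True mono_Max_commute[OF m, of "range (\<lambda>i. \<bar>y $ i\<bar>)"]
    by (simp add: pnorm_def)
next
  case False
  define q where "q = real_of_ereal p"
  have q: "q \<ge> 1" using p False unfolding q_def
    by (cases p) auto
  have "(\<Sum>i\<in>UNIV. \<bar>(a *\<^sub>R y) $ i\<bar> powr q) = a powr q * (\<Sum>i\<in>UNIV. \<bar>y $ i\<bar> powr q)"
    using a by (simp add: abs_mult powr_mult sum_distrib_left)
  then have "(\<Sum>i\<in>UNIV. \<bar>(a *\<^sub>R y) $ i\<bar> powr q) powr (1/q)
      = (a powr q) powr (1/q) * (\<Sum>i\<in>UNIV. \<bar>y $ i\<bar> powr q) powr (1/q)"
    by (simp add: powr_mult sum_nonneg)
  also have "(a powr q) powr (1/q) = a" using a q by (simp add: powr_powr)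
  finally show ?thesis using False by (simp add: pnorm_def q_def)
qed

lemma pnorm_comp:
  assumes p: "1 \<le> p"
  shows "\<bar>y $ i\<bar> \<le> pnorm p y"
proof (cases "p = \<infinity>")
  case True
  then show ?thesis by (simp add: pnorm_def)
next
  case False
  define q where "q = real_of_ereal p"
  have q: "q \<ge> 1" using p False unfolding q_def
    by (cases p) auto
  have "\<bar>y $ i\<bar> = (\<bar>y $ i\<bar> powr q) powr (1/q)" using q by (simp add: powr_powr)
  also have "\<dots> \<le> (\<Sum>i\<in>UNIV. \<bar>y $ i\<bar> powr q) powr (1/q)"
    using q by (intro powr_mono2) (auto intro: member_le_sum)
  finally show ?thesis using False by (simp add: pnorm_def q_def)
qed

lemma norm_le_pnorm:
  assumes p: "1 \<le> p"
  shows "norm y \<le> real CARD('m) * pnorm p (y::real^'m)"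
proof -
  have "norm y \<le> (\<Sum>i\<in>UNIV. \<bar>y $ i\<bar>)" by (rule norm_le_l1_cart)
  also have "\<dots> \<le> (\<Sum>i\<in>(UNIV::'m set). pnorm p y)" by (intro sum_mono pnorm_comp[OF p])
  finally show ?thesis by simp
qed

lemma Y_convex:
  assumes C: "convex C" "cone C" and X: "convex X" and G: "C_convex C X \<Gamma>"
  shows "convex (msum (\<Gamma> ` X) C)"
proof (rule convexI)
  fix y1 y2 and u v :: real
  assume y1: "y1 \<in> msum (\<Gamma> ` X) C" and y2: "y2 \<in> msum (\<Gamma> ` X) C"
    and uv: "0 \<le> u" "0 \<le> v" "u + v = 1"
  obtain x1 c1 where x1: "x1 \<in> X" "c1 \<in> C" "y1 = \<Gamma> x1 + c1" using y1 by (auto simp: msum_def)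
  obtain x2 c2 where x2: "x2 \<in> X" "c2 \<in> C" "y2 = \<Gamma> x2 + c2" using y2 by (auto simp: msum_def)
  have v: "v = 1 - u" using uv by simp
  define x where "x = u *\<^sub>R x1 + v *\<^sub>R x2"
  have xX: "x \<in> X" using X x1 x2 uv unfolding x_def by (auto intro: convexD)
  have d1: "u *\<^sub>R \<Gamma> x1 + v *\<^sub>R \<Gamma> x2 - \<Gamma> x \<in> C"
    using G x1 x2 uv unfolding C_convex_def x_def v by auto
  have d2: "u *\<^sub>R c1 + v *\<^sub>R c2 \<in> C" using C(1) x1 x2 uv by (auto intro: convexD)
  have d: "(u *\<^sub>R \<Gamma> x1 + v *\<^sub>R \<Gamma> x2 - \<Gamma> x) + (u *\<^sub>R c1 + v *\<^sub>R c2) \<in> C"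
    by (rule cone_add[OF C d1 d2])
  have "u *\<^sub>R y1 + v *\<^sub>R y2 = \<Gamma> x + ((u *\<^sub>R \<Gamma> x1 + v *\<^sub>R \<Gamma> x2 - \<Gamma> x) + (u *\<^sub>R c1 + v *\<^sub>R c2))"
    using x1 x2 by (simp add: algebra_simps)
  then show "u *\<^sub>R y1 + v *\<^sub>R y2 \<in> msum (\<Gamma> ` X) C"
    using xX d unfolding msum_def by blast
qed

lemma part1:
  fixes C :: "'b::real_normed_vector set"
  assumes C: "convex C" "cone C" and X: "convex X" and G: "C_convex C X \<Gamma>"
    and S: "pv_solution C X \<Gamma> Sb"
  shows "infimizer C X \<Gamma> (fst ` Sb)"
proof -
  let ?Y = "msum (\<Gamma> ` X) C"
  have Sb: "Sb \<subseteq> Sa C X \<Gamma>" and Yc: "?Y \<subseteq> closure (convex hull (snd ` Sb))"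
    using S by (auto simp: pv_solution_def Ya_eq)
  have Xb: "fst ` Sb \<subseteq> X" using Sb by (auto simp: Sa_def)
  have s1: "snd ` Sb \<subseteq> msum (\<Gamma> ` fst ` Sb) C"
  proof
    fix y assume "y \<in> snd ` Sb"
    then obtain x where xy: "(x, y) \<in> Sb" by force
    then have "y \<in> msum {\<Gamma> x} C" using Sb by (auto simp: Sa_def)
    then show "y \<in> msum (\<Gamma> ` fst ` Sb) C" using xy by (force simp: msum_def)
  qed
  have s2: "msum (\<Gamma> ` fst ` Sb) C \<subseteq> ?Y" using Xb unfolding msum_def by blast
  have "closure ?Y \<subseteq> closure (convex hull (msum (\<Gamma> ` fst ` Sb) C))"
  proof -
    have "closure ?Y \<subseteq> closure (convex hull (snd ` Sb))"
      using closure_mono[OF Yc] by simp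
    also have "\<dots> \<subseteq> closure (convex hull (msum (\<Gamma> ` fst ` Sb) C))"
      by (intro closure_mono hull_mono s1)
    finally show ?thesis .
  qed
  moreover have "closure (convex hull (msum (\<Gamma> ` fst ` Sb) C)) \<subseteq> closure ?Y"
    by (intro closure_mono hull_minimal s2 Y_convex C X G)
  ultimately show ?thesis using Xb unfolding infimizer_def upper_image_def by blast
qed

lemma int_plus_closure:
  fixes C :: "'a::euclidean_space set"
  assumes C: "convex C" "cone C" and c: "c \<in> interior C" and z: "z \<in> closure C"
  shows "c + z \<in> C"
proof (cases "z = c")
  case True
  have "c \<in> C" using c interior_subset by blast
  then show ?thesis using cone_add[OF C] True by blast
next
  case False
  then have "midpoint c z \<in> open_segment c z" by simp
  then have "midpoint c z \<in> C"
    using in_interior_closure_convex_segment[OF C(1) c z] interior_subset by blast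
  then have "2 *\<^sub>R midpoint c z \<in> C" using C(2) by (simp add: cone_def)
  then show ?thesis by (simp add: midpoint_def)
qed

lemma bounded_translate_cone:
  fixes C :: "'a::real_normed_vector set"
  assumes C: "cone C" and c: "c \<in> interior C" and K: "bounded K"
  shows "\<exists>q. K \<subseteq> msum {q} C"
proof -
  obtain r where r: "r > 0" "ball c r \<subseteq> C" using c mem_interior by blast
  obtain M where M: "M > 0" "\<forall>k\<in>K. norm k \<le> M" using K bounded_pos by blast
  define t where "t = M / r + 1"
  have t: "t > 0" using M r unfolding t_def by (simp add: add_pos_pos)
  have rt: "M < r * t" using r unfolding t_def by (simp add: algebra_simps)
  have "K \<subseteq> msum {- (t *\<^sub>R c)} C"
  proof
    fix k assume k: "k \<in> K"
    have "norm ((1/t) *\<^sub>R k) = norm k / t" using t by simp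
    also have "\<dots> \<le> M / t" using M k t by (simp add: divide_right_mono)
    also have "\<dots> < r" using rt t by (simp add: divide_less_eq mult.commute)
    finally have "c + (1/t) *\<^sub>R k \<in> ball c r" by (simp add: dist_norm)
    then have "c + (1/t) *\<^sub>R k \<in> C" using r by blast
    then have "t *\<^sub>R (c + (1/t) *\<^sub>R k) \<in> C" using C t by (simp add: cone_def)
    then have "t *\<^sub>R c + k \<in> C" using t by (simp add: scaleR_add_right)
    moreover have "k = - (t *\<^sub>R c) + (t *\<^sub>R c + k)" by simp
    ultimately show "k \<in> msum {- (t *\<^sub>R c)} C" unfolding msum_def by blast
  qed
  then show ?thesis by blast
qed

lemma C_sub_rec:
  fixes C :: "'b::real_normed_vector set"
  assumes C: "convex C" "cone C"
  shows "C \<subseteq> rec_cone (closure (msum (\<Gamma> ` X) C))"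
proof
  fix w assume w: "w \<in> C"
  let ?Y = "msum (\<Gamma> ` X) C"
  have tr: "(+) w ` ?Y \<subseteq> ?Y" if "w \<in> C" for w
  proof
    fix z assume "z \<in> (+) w ` ?Y"
    then obtain x c' where "x \<in> X" "c' \<in> C" "z = w + (\<Gamma> x + c')" by (auto simp: msum_def)
    moreover have "c' + w \<in> C" using cone_add[OF C \<open>c' \<in> C\<close> that] .
    moreover have "w + (\<Gamma> x + c') = \<Gamma> x + (c' + w)" by (simp add: algebra_simps)
    ultimately show "z \<in> ?Y" unfolding msum_def by blast
  qed
  show "w \<in> rec_cone (closure ?Y)" unfolding rec_cone_def
  proof (intro CollectI ballI allI impI)
    fix x and l :: real assume x: "x \<in> closure ?Y" and l: "0 \<le> l"
    have lw: "l *\<^sub>R w \<in> C" using C(2) w l by (simp add: cone_def)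
    have "(+) (l *\<^sub>R w) ` closure ?Y = closure ((+) (l *\<^sub>R w) ` ?Y)" by (simp add: closure_translation)
    also have "\<dots> \<subseteq> closure ?Y" by (intro closure_mono tr lw)
    finally show "x + l *\<^sub>R w \<in> closure ?Y" using x by (auto simp: add.commute)
  qed
qed

lemma part2:
  fixes C :: "(real^'m) set" and X :: "'a::real_vector set"
  assumes C: "convex C" "cone C" and c: "c \<in> interior C" and X: "convex X" and G: "C_convex C X \<Gamma>"
    and sb: "pv_self_bounded C X \<Gamma>"
  shows "cvop_self_bounded C X \<Gamma> \<and>
          (rec_cone (closure (Ya C X \<Gamma>)) = closure C \<longrightarrow> cvop_bounded C X \<Gamma>)"
proof -
  let ?Y = "msum (\<Gamma> ` X) C"
  let ?R = "rec_cone (closure ?Y)"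
  have Ycv: "convex ?Y" by (rule Y_convex[OF C X G])
  have Rcl: "closed ?R" by (rule rec_cone_closed) simp
  have CR: "C \<subseteq> ?R" by (rule C_sub_rec[OF C])
  have Rad: "u + v \<in> ?R" if "u \<in> ?R" "v \<in> ?R" for u v
    using rec_cone_add[OF convex_closure[OF Ycv] that] .
  obtain P where P: "finite P" "P \<noteq> {}" "?Y \<subseteq> msum (convex hull P) ?R" and YU: "?Y \<noteq> UNIV"
    using sb unfolding pv_self_bounded_def Ya_eq by blast
  have Kc: "compact (convex hull P)" using P(1) by (simp add: compact_convex_hull finite_imp_compact)
  have cl: "closure ?Y \<subseteq> msum (convex hull P) ?R"
    by (intro closure_minimal P(3) closed_msum Kc Rcl)
  obtain q where q: "convex hull P \<subseteq> msum {q} C"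
    using bounded_translate_cone[OF C(2) c compact_imp_bounded[OF Kc]] by blast
  have "msum (convex hull P) ?R \<subseteq> msum {q} ?R"
  proof
    fix z assume "z \<in> msum (convex hull P) ?R"
    then obtain k r where kr: "k \<in> convex hull P" "r \<in> ?R" "z = k + r" by (auto simp: msum_def)
    then obtain w where w: "w \<in> C" "k = q + w" using q by (auto simp: msum_def)
    have "w + r \<in> ?R" using Rad CR w kr by blast
    moreover have "z = q + (w + r)" using kr w by (simp add: add.assoc)
    ultimately show "z \<in> msum {q} ?R" unfolding msum_def by blast
  qed
  with cl have clq: "closure ?Y \<subseteq> msum {q} ?R" by blast
  have "closure ?Y \<noteq> UNIV"
  proof
    assume "closure ?Y = UNIV"
    then have "rel_interior ?Y = UNIV" using convex_rel_interior_closure[OF Ycv] by simp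
    then have "?Y = UNIV" using rel_interior_subset by blast
    then show False using YU by simp
  qed
  then have sbd: "cvop_self_bounded C X \<Gamma>"
    using clq unfolding cvop_self_bounded_def upper_image_def by blast
  have "cvop_bounded C X \<Gamma>" if RC: "rec_cone (closure (Ya C X \<Gamma>)) = closure C"
  proof -
    have "closure ?Y \<subseteq> msum {q - c} C"
    proof
      fix z assume "z \<in> closure ?Y"
      then obtain r where r: "r \<in> closure C" "z = q + r" using clq RC by (auto simp: msum_def Ya_eq)
      have "c + r \<in> C" by (rule int_plus_closure[OF C c r(1)])
      moreover have "z = (q - c) + (c + r)" using r by simp
      ultimately show "z \<in> msum {q - c} C" unfolding msum_def by blast
    qed
    then show ?thesis unfolding cvop_bounded_def upper_image_def by blast
  qed
  with sbd show ?thesis by blast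
qed

lemma part3:
  fixes C :: "(real^'m) set" and X :: "'a::real_vector set"
  assumes p: "1 \<le> p" and C: "convex C" "cone C" and CU: "C \<noteq> UNIV"
    and c: "c \<in> interior C" and X: "convex X" and G: "C_convex C X \<Gamma>"
    and e: "e > 0" and S: "pv_fin_eps_solution p C X \<Gamma> e Sb"
    and e': "e' > e / delta_c p C c"
  shows "fin_eps_infimizer_sb C X \<Gamma> c e' (fst ` Sb)"
proof -
  let ?Y = "msum (\<Gamma> ` X) C"
  let ?R = "rec_cone (closure ?Y)"
  let ?D = "{d. d > 0 \<and> msum {c} (pball p d) \<subseteq> C}"
  have Ycv: "convex ?Y" by (rule Y_convex[OF C X G])
  have Rcl: "closed ?R" by (rule rec_cone_closed) simp
  have CR: "C \<subseteq> ?R" by (rule C_sub_rec[OF C])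
  have Rad: "u + v \<in> ?R" if "u \<in> ?R" "v \<in> ?R" for u v
    using rec_cone_add[OF convex_closure[OF Ycv] that] .
  obtain r where r: "r > 0" "ball c r \<subseteq> C" using c mem_interior by blast
  define d0 where "d0 = r / (2 * real CARD('m))"
  have d0: "d0 > 0" using r unfolding d0_def by simp
  have "msum {c} (pball p d0) \<subseteq> C"
  proof
    fix z assume "z \<in> msum {c} (pball p d0)"
    then obtain y where y: "pnorm p y \<le> d0" "z = c + y" by (auto simp: msum_def pball_def)
    have "norm y \<le> real CARD('m) * pnorm p y" by (rule norm_le_pnorm[OF p])
    also have "\<dots> \<le> real CARD('m) * d0" using y by (intro mult_left_mono) auto
    also have "\<dots> < r" using r unfolding d0_def by simp
    finally show "z \<in> C" using r y by (auto simp: dist_norm)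
  qed
  with d0 have d0D: "d0 \<in> ?D" by blast
  have bdd: "bdd_above ?D"
  proof (rule ccontr)
    assume nb: "\<not> bdd_above ?D"
    have "z \<in> C" for z
    proof -
      from nb obtain d where d: "d \<in> ?D" "d > pnorm p (z - c)"
        unfolding bdd_above_def by (meson not_le)
      then have "z - c \<in> pball p d" by (simp add: pball_def)
      then have "c + (z - c) \<in> msum {c} (pball p d)" unfolding msum_def by blast
      then show "z \<in> C" using d by auto
    qed
    then show False using CU by auto
  qed
  have Dne: "?D \<noteq> {}" using d0D by blast
  have dpos: "delta_c p C c > 0"
    using cSup_upper[OF d0D bdd] d0 unfolding delta_c_def by linarith
  have e'pos: "e' > 0" using e' e dpos by (smt (verit) divide_pos_pos)
  have "e / e' < delta_c p C c" using e' e'pos dpos by (simp add: divide_less_eq mult.commute)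
  then obtain d where d: "d \<in> ?D" "e / e' < d"
    using less_cSup_iff[OF Dne bdd] unfolding delta_c_def by blast
  have Sb: "Sb \<noteq> {}" "finite Sb" "Sb \<subseteq> Sa C X \<Gamma>"
    and Yin: "?Y \<subseteq> msum (msum (convex hull (snd ` Sb)) ?R) (pball p e)"
    using S by (auto simp: pv_fin_eps_solution_def Ya_eq)
  have Xb: "fst ` Sb \<subseteq> X" using Sb by (auto simp: Sa_def)
  let ?K = "convex hull (\<Gamma> ` fst ` Sb)"
  have Kc: "compact ?K" using Sb(2) by (simp add: compact_convex_hull finite_imp_compact)
  have s1: "snd ` Sb \<subseteq> msum ?K C"
  proof
    fix y assume "y \<in> snd ` Sb"
    then obtain x where xy: "(x, y) \<in> Sb" by force
    then have "y \<in> msum {\<Gamma> x} C" using Sb by (auto simp: Sa_def)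
    moreover have "\<Gamma> x \<in> ?K" using xy by (intro hull_inc) force
    ultimately show "y \<in> msum ?K C" by (force simp: msum_def)
  qed
  have s2: "convex hull (snd ` Sb) \<subseteq> msum ?K C"
    by (intro hull_minimal s1 convex_msum convex_convex_hull C(1))
  let ?T = "msum (msum ?K ?R) {- (e' *\<^sub>R c)}"
  have Tcl: "closed ?T" by (intro closed_msum_single closed_msum Kc Rcl)
  have "?Y \<subseteq> ?T"
  proof
    fix y assume "y \<in> ?Y"
    then have "y \<in> msum (msum (convex hull (snd ` Sb)) ?R) (pball p e)" using Yin by blast
    then obtain s rr b where sb: "s \<in> convex hull (snd ` Sb)" "rr \<in> ?R" "b \<in> pball p e"
        "y = s + rr + b"
      unfolding msum_iff by (metis msum_iff)
    obtain g c1 where gc: "g \<in> ?K" "c1 \<in> C" "s = g + c1" using s2 sb(1) by (auto simp: msum_def)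
    have "pnorm p ((1/e') *\<^sub>R b) = (1/e') * pnorm p b" using e'pos by (simp add: pnorm_scale[OF p])
    also have "\<dots> \<le> e / e'" using sb(3) e'pos by (simp add: pball_def divide_right_mono)
    also have "\<dots> < d" by (rule d(2))
    finally have "(1/e') *\<^sub>R b \<in> pball p d" by (simp add: pball_def)
    then have "c + (1/e') *\<^sub>R b \<in> msum {c} (pball p d)" unfolding msum_def by blast
    then have "c + (1/e') *\<^sub>R b \<in> C" using d(1) by blast
    then have "e' *\<^sub>R (c + (1/e') *\<^sub>R b) \<in> C" using C(2) e'pos by (simp add: cone_def)
    then have w: "e' *\<^sub>R c + b \<in> C" using e'pos by (simp add: scaleR_add_right)
    have wR: "c1 + rr + (e' *\<^sub>R c + b) \<in> ?R" using Rad CR w gc(2) sb(2) by blast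
    have "y = (g + (c1 + rr + (e' *\<^sub>R c + b))) + (- (e' *\<^sub>R c))"
      using sb(4) gc(3) by (simp add: algebra_simps)
    then show "y \<in> ?T" using gc(1) wR unfolding msum_def by blast
  qed
  then have "closure ?Y \<subseteq> ?T" by (intro closure_minimal Tcl)
  then show ?thesis using Sb Xb unfolding fin_eps_infimizer_sb_def upper_image_def by blast
qed



theorem mainTheorem12:
  fixes C :: "(real^'m) set" and X :: "(real^'n) set" and \<Gamma> :: "real^'n \<Rightarrow> real^'m"
    and p :: ereal and c :: "real^'m"
  assumes p: "1 \<le> p"
    and C_cone: "convex C" "cone C"
    and C_nontriv: "C \<noteq> {0}" "C \<noteq> UNIV"
    and C_pointed: "pointed C"
    and C_solid: "interior C \<noteq> {}"
    and X_convex: "convex X"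
    and \<Gamma>_conv: "C_convex C X \<Gamma>"
    and c: "c \<in> interior C" "pnorm p c = 1"
  shows
    "(\<forall>Sb. pv_solution C X \<Gamma> Sb \<longrightarrow> infimizer C X \<Gamma> (fst ` Sb))
     \<and> (pv_self_bounded C X \<Gamma> \<longrightarrow>
          cvop_self_bounded C X \<Gamma> \<and>
          (rec_cone (closure (Ya C X \<Gamma>)) = closure C \<longrightarrow> cvop_bounded C X \<Gamma>))
     \<and> (\<forall>e Sb. e > 0 \<and> pv_self_bounded C X \<Gamma> \<and> pv_fin_eps_solution p C X \<Gamma> e Sb \<longrightarrow>
          (\<forall>e'. e' > e / delta_c p C c \<longrightarrow> fin_eps_infimizer_sb C X \<Gamma> c e' (fst ` Sb)))"
proof -
  have C0: "convex C" "cone C" using C_cone by auto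
  show ?thesis
    using part1[OF C0 X_convex \<Gamma>_conv] part2[OF C0 c(1) X_convex \<Gamma>_conv]
      part3[OF p C0 C_nontriv(2) c(1) X_convex \<Gamma>_conv] by blast
qed

end
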